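(* Let $r,s\ge 1$, $t\ge0$, and let $F:U\to\mathbb P^{r',s',t'}$ be a holomorphic map, where $U\subset\mathbb P^{r,s,t}$ is an open set containing a null point. If $F$ maps null points of $U$ to null points, then there exists a connected open set $V\subset U$ containing a null point such that $F|_V:V\to\mathbb P^{r',s',t'}$ is a local orthogonal map.
   Context: Let $r,s,t\ge 0$ be integers with $n=r+s+t>0$. $\mathbb C^{r,s,t}$ denotes $\mathbb C^n$ equipped with the (possibly degenerate, indefinite) Hermitian form $\langle z,w\rangle_{r,s,t}=\sum_{j=1}^{r}z_j\bar w_j-\sum_{j=r+1}^{r+s}z_j\bar w_j$, and $\mathbb P^{r,s,t}$ is its projectivization. A point $[z]\in\mathbb P^{r,s,t}$ is positive, negative or null according as $\langle z,z\rangle_{r,s,t}>0$, $<0$ or $=0$. Two points $[z],[w]$ are orthogonal, $[z]\perp[w]$, if $\langle z,w\rangle_{r,s,t}=0$. Let $V\subset\mathbb P^{r,s,t}$ be a connected open set containing a null point. A holomorphic map $F:V\to\mathbb P^{r',s',t'}$ is called a local orthogonal map if $F(p)\perp F(q)$ for all $p,q\in V$ with $p\perp q$. *)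

theory Defs
  imports "HOL-Analysis.Analysis"
begin

text \<open>A Hermitian form of signature (r,s,t) is given by two disjoint index sets Ps (positive
  coordinates, card r) and Ns (negative coordinates, card s); the remaining t coordinates
  are degenerate.\<close>

definition hform :: "'n set \<Rightarrow> 'n set \<Rightarrow> complex ^ 'n \<Rightarrow> complex ^ 'n \<Rightarrow> complex" where
  "hform Ps Ns z w = (\<Sum>i\<in>Ps. z $ i * cnj (w $ i)) - (\<Sum>i\<in>Ns. z $ i * cnj (w $ i))"

definition signature_ok :: "'n::finite set \<Rightarrow> 'n set \<Rightarrow> bool" where
  "signature_ok Ps Ns \<longleftrightarrow> Ps \<inter> Ns = {}"

definition proj_pt :: "complex ^ 'n \<Rightarrow> (complex ^ 'n) set" where
  "proj_pt z = {c *s z | c. c \<noteq> 0}"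

definition Proj :: "(complex ^ 'n) set set" where
  "Proj = {proj_pt z | z. z \<noteq> 0}"

definition proj_topology :: "(complex ^ 'n) set topology" where
  "proj_topology = topology (\<lambda>U. U \<subseteq> Proj \<and> open {z. z \<noteq> 0 \<and> proj_pt z \<in> U})"

definition cholomorphic_on ::
  "(complex ^ 'n \<Rightarrow> complex ^ 'm) \<Rightarrow> (complex ^ 'n) set \<Rightarrow> bool" where
  "cholomorphic_on G W \<longleftrightarrow> (\<forall>x\<in>W. \<exists>L. (G has_derivative L) (at x) \<and>
      (\<forall>c v. L (c *s v) = c *s L v))"

definition proj_holomorphic ::
  "((complex ^ 'n) set \<Rightarrow> (complex ^ 'm) set) \<Rightarrow> (complex ^ 'n) set set \<Rightarrow> bool" where
  "proj_holomorphic F U \<longleftrightarrow>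
     (\<forall>p\<in>U. F p \<in> Proj) \<and>
     (\<forall>z. z \<noteq> 0 \<and> proj_pt z \<in> U \<longrightarrow>
        (\<exists>W G. open W \<and> z \<in> W \<and> (\<forall>w\<in>W. w \<noteq> 0 \<and> proj_pt w \<in> U) \<and>
           cholomorphic_on G W \<and>
           (\<forall>w\<in>W. G w \<noteq> 0 \<and> proj_pt (G w) = F (proj_pt w))))"

definition null_pt :: "'n set \<Rightarrow> 'n set \<Rightarrow> (complex ^ 'n) set \<Rightarrow> bool" where
  "null_pt Ps Ns p \<longleftrightarrow> (\<exists>z. z \<noteq> 0 \<and> p = proj_pt z \<and> hform Ps Ns z z = 0)"

definition orth_pt :: "'n set \<Rightarrow> 'n set \<Rightarrow> (complex ^ 'n) set \<Rightarrow> (complex ^ 'n) set \<Rightarrow> bool" where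
  "orth_pt Ps Ns p q \<longleftrightarrow> (\<exists>z w. z \<noteq> 0 \<and> w \<noteq> 0 \<and> p = proj_pt z \<and> q = proj_pt w \<and>
      hform Ps Ns z w = 0)"

definition local_orthogonal_map ::
  "'n set \<Rightarrow> 'n set \<Rightarrow> 'm set \<Rightarrow> 'm set \<Rightarrow>
   ((complex ^ 'n) set \<Rightarrow> (complex ^ 'm) set) \<Rightarrow> (complex ^ 'n) set set \<Rightarrow> bool" where
  "local_orthogonal_map Ps Ns Ps' Ns' F V \<longleftrightarrow>
     openin proj_topology V \<and> connectedin proj_topology V \<and>
     (\<exists>p\<in>V. null_pt Ps Ns p) \<and> proj_holomorphic F V \<and>
     (\<forall>p\<in>V. \<forall>q\<in>V. orth_pt Ps Ns p q \<longrightarrow> orth_pt Ps' Ns' (F p) (F q))"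

end

theory Submission
  imports Defs "HOL-Complex_Analysis.Conformal_Mappings"
begin


lemma curve_deriv:
  fixes \<gamma> :: "complex \<Rightarrow> complex ^ 'n"
  assumes "\<And>k. ((\<lambda>l. \<gamma> l $ k) has_field_derivative d $ k) (at l0)"
  shows "(\<gamma> has_derivative (\<lambda>h. h *s d)) (at l0)"
proof -
  have bl: "bounded_linear (\<lambda>h::complex. h *s d)"
  proof -
    have "linear (\<lambda>h::complex. h *s d)"
      by (rule linearI) (simp_all add: vec_eq_iff algebra_simps)
    then show ?thesis using linear_conv_bounded_linear by blast
  qed
  have "((\<lambda>y. ((\<gamma> y - \<gamma> l0) - (y - l0) *s d) /\<^sub>R norm (y - l0)) \<longlongrightarrow> 0) (at l0)"
  proof (rule vec_tendstoI)
    fix k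
    from assms[of k] have "((\<lambda>y. ((\<gamma> y $ k - \<gamma> l0 $ k) - d $ k * (y - l0)) /\<^sub>R norm (y - l0)) \<longlongrightarrow> 0) (at l0)"
      unfolding has_field_derivative_def has_derivative_def by simp
    then show "((\<lambda>y. (((\<gamma> y - \<gamma> l0) - (y - l0) *s d) /\<^sub>R norm (y - l0)) $ k) \<longlongrightarrow> 0 $ k) (at l0)"
      by (simp add: algebra_simps)
  qed
  then show ?thesis unfolding has_derivative_def using bl by simp
qed

lemma comp_field_deriv:
  fixes G :: "complex ^ 'n \<Rightarrow> complex ^ 'm" and \<gamma> :: "complex \<Rightarrow> complex ^ 'n"
  assumes "(G has_derivative L) (at (\<gamma> l0))" "\<forall>c v. L (c *s v) = c *s L v"
    and "(\<gamma> has_derivative (\<lambda>h. h *s d)) (at l0)"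
  shows "((\<lambda>l. G (\<gamma> l) $ m) has_field_derivative (L d $ m)) (at l0)"
proof -
  have "((G \<circ> \<gamma>) has_derivative (L \<circ> (\<lambda>h. h *s d))) (at l0)"
    by (rule diff_chain_at[OF assms(3) assms(1)])
  then have "((\<lambda>l. (G \<circ> \<gamma>) l $ m) has_derivative (\<lambda>h. (L \<circ> (\<lambda>h. h *s d)) h $ m)) (at l0)"
    by (rule bounded_linear.has_derivative[OF bounded_linear_vec_nth])
  moreover have "(\<lambda>h. (L \<circ> (\<lambda>h. h *s d)) h $ m) = (*) (L d $ m)"
    using assms(2) by (auto simp: fun_eq_iff mult.commute)
  ultimately show ?thesis unfolding has_field_derivative_def by (simp add: o_def)
qed

definition cvec :: "complex ^ 'n \<Rightarrow> complex ^ 'n" where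
  "cvec v = (\<chi> k. cnj (v $ k))"

lemma cvec_cvec[simp]: "cvec (cvec v) = v"
  by (simp add: cvec_def vec_eq_iff)

lemma cvec_nth[simp]: "cvec v $ k = cnj (v $ k)"
  by (simp add: cvec_def)

lemma bounded_linear_cvec: "bounded_linear cvec"
proof -
  have "linear cvec"
    by (rule linearI) (simp_all add: vec_eq_iff cvec_def)
  then show ?thesis using linear_conv_bounded_linear by blast
qed

lemma conj_hol:
  fixes G :: "complex ^ 'n \<Rightarrow> complex ^ 'm"
  assumes "(G has_derivative L) (at (cvec v0))" "\<forall>c v. L (c *s v) = c *s L v"
  shows "((\<lambda>v. cvec (G (cvec v))) has_derivative (\<lambda>u. cvec (L (cvec u)))) (at v0)"
    and "\<forall>c v. cvec (L (cvec (c *s v))) = c *s cvec (L (cvec v))"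
proof -
  have d1: "(cvec has_derivative cvec) (at v0)"
    by (rule bounded_linear_imp_has_derivative[OF bounded_linear_cvec])
  have "((G \<circ> cvec) has_derivative (L \<circ> cvec)) (at v0)"
    by (rule diff_chain_at[OF d1 assms(1)])
  then have "((\<lambda>v. cvec ((G \<circ> cvec) v)) has_derivative (\<lambda>u. cvec ((L \<circ> cvec) u))) (at v0)"
    by (rule bounded_linear.has_derivative[OF bounded_linear_cvec])
  then show "((\<lambda>v. cvec (G (cvec v))) has_derivative (\<lambda>u. cvec (L (cvec u)))) (at v0)"
    by (simp add: o_def)
  show "\<forall>c v. cvec (L (cvec (c *s v))) = c *s cvec (L (cvec v))"
  proof (intro allI)
    fix c and v :: "complex ^ 'n"
    have "cvec (c *s v) = cnj c *s cvec v" by (simp add: vec_eq_iff)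
    then have "L (cvec (c *s v)) = cnj c *s L (cvec v)" using assms(2) by simp
    then show "cvec (L (cvec (c *s v))) = c *s cvec (L (cvec v))"
      by (simp add: vec_eq_iff)
  qed
qed

definition upd :: "complex ^ 'k \<Rightarrow> 'k \<Rightarrow> complex \<Rightarrow> complex ^ 'k" where
  "upd x i l = (\<chi> k. if k = i then l else x $ k)"

lemma upd_nth: "upd x i l $ k = (if k = i then l else x $ k)"
  by (simp add: upd_def)

lemma upd_same[simp]: "upd x i (x $ i) = x"
  by (simp add: upd_def vec_eq_iff)

lemma real_ball_zero:
  fixes f :: "complex ^ 'k \<Rightarrow> complex" and c :: "complex ^ 'k"
  assumes creal: "\<And>i. c $ i \<in> \<real>"
    and hol: "\<And>x i. x \<in> ball c r \<Longrightarrow> (\<lambda>l. f (upd x i l)) holomorphic_on {l. upd x i l \<in> ball c r}"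
    and zero: "\<And>x. x \<in> ball c r \<Longrightarrow> (\<forall>i. x $ i \<in> \<real>) \<Longrightarrow> f x = 0"
  shows "\<forall>x\<in>ball c r. f x = 0"
proof -
  have "finite K \<Longrightarrow> \<forall>x\<in>ball c r. (\<forall>i. i \<notin> K \<longrightarrow> x $ i \<in> \<real>) \<longrightarrow> f x = 0" for K :: "'k set"
  proof (induction K rule: finite_induct)
    case empty
    then show ?case using zero by auto
  next
    case (insert k K)
    show ?case
    proof (intro ballI impI)
      fix x assume xb: "x \<in> ball c r" and xr: "\<forall>i. i \<notin> insert k K \<longrightarrow> x $ i \<in> \<real>"
      define S where "S = {l. upd x k l \<in> ball c r}"
      have contu: "continuous_on UNIV (\<lambda>l. upd x k l)"
        unfolding upd_def
      proof (intro continuous_on_vec_lambda)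
        fix i show "continuous_on UNIV (\<lambda>l. if i = k then l else x $ i)"
          by (cases "i = k") (simp_all add: continuous_on_const continuous_on_id)
      qed
      have "open S"
      proof -
        have "open ((\<lambda>l. upd x k l) -` ball c r)"
          by (rule open_vimage[OF open_ball contu])
        then show ?thesis unfolding S_def vimage_def by simp
      qed
      have "convex S"
        unfolding S_def convex_def
      proof (intro ballI allI impI)
        fix a b :: complex and u v :: real
        assume "a \<in> {l. upd x k l \<in> ball c r}" "b \<in> {l. upd x k l \<in> ball c r}"
          and uv: "0 \<le> u" "0 \<le> v" "u + v = 1"
        then have a: "upd x k a \<in> ball c r" and b: "upd x k b \<in> ball c r" by auto
        have "upd x k (u *\<^sub>R a + v *\<^sub>R b) = u *\<^sub>R upd x k a + v *\<^sub>R upd x k b"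
          using uv by (auto simp: vec_eq_iff upd_nth algebra_simps simp flip: scaleR_add_left)
        then show "u *\<^sub>R a + v *\<^sub>R b \<in> {l. upd x k l \<in> ball c r}"
          using convexD[OF convex_ball a b uv] by simp
      qed
      then have "connected S" by (rule convex_connected)
      have "x $ k \<in> S" unfolding S_def using xb by simp
      have ck: "c $ k \<in> S"
      proof -
        have "norm (c - upd x k (c $ k)) \<le> norm (c - x)"
          unfolding norm_vec_def by (rule L2_set_mono) (auto simp: upd_nth)
        then show ?thesis using xb unfolding S_def by (simp add: dist_norm)
      qed
      define U where "U = S \<inter> \<real>"
      have U0: "f (upd x k l) = 0" if "l \<in> U" for l
      proof -
        have "upd x k l \<in> ball c r" using that unfolding U_def S_def by simp
        moreover have "\<forall>i. i \<notin> K \<longrightarrow> upd x k l $ i \<in> \<real>"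
          using that xr unfolding U_def by (auto simp: upd_nth)
        ultimately show ?thesis using insert.IH by blast
      qed
      obtain e where e: "e > 0" "ball (c $ k) e \<subseteq> S"
        using \<open>open S\<close> ck open_contains_ball by blast
      have "c $ k islimpt U"
        unfolding islimpt_approachable
      proof (intro allI impI)
        fix \<epsilon> :: real assume "\<epsilon> > 0"
        define t where "t = min \<epsilon> e / 2"
        have t: "t > 0" "t < \<epsilon>" "t < e" using \<open>\<epsilon> > 0\<close> e by (auto simp: t_def)
        have "c $ k + of_real t \<in> ball (c $ k) e" using t by (simp add: dist_norm)
        moreover have "c $ k + of_real t \<in> \<real>" using creal[of k] by simp
        ultimately have "c $ k + of_real t \<in> U" using e unfolding U_def by blast
        moreover have "c $ k + of_real t \<noteq> c $ k" using t by simp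
        moreover have "dist (c $ k + of_real t) (c $ k) < \<epsilon>" using t by (simp add: dist_norm)
        ultimately show "\<exists>x'\<in>U. x' \<noteq> c $ k \<and> dist x' (c $ k) < \<epsilon>" by blast
      qed
      have "f (upd x k (x $ k)) = 0"
        by (rule analytic_continuation[of "\<lambda>l. f (upd x k l)" S U "c $ k"])
           (use hol[OF xb, of k] \<open>open S\<close> \<open>connected S\<close> ck \<open>x $ k \<in> S\<close> U0 \<open>c $ k islimpt U\<close> in
            \<open>auto simp: S_def U_def\<close>)
      then show "f x = 0" by simp
    qed
  qed
  from this[of UNIV] show ?thesis by simp
qed

lemma hol_curve_comp:
  fixes G :: "complex ^ 'n \<Rightarrow> complex ^ 'm" and \<gamma> :: "complex \<Rightarrow> complex ^ 'n"
  assumes "open T" "cholomorphic_on G W" "\<And>l. l \<in> T \<Longrightarrow> \<gamma> l \<in> W"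
    and "\<And>k. (\<lambda>l. \<gamma> l $ k) holomorphic_on T"
  shows "(\<lambda>l. G (\<gamma> l) $ m) holomorphic_on T"
  unfolding holomorphic_on_open[OF assms(1)]
proof
  fix l assume l: "l \<in> T"
  obtain L where L: "(G has_derivative L) (at (\<gamma> l))" "\<forall>c v. L (c *s v) = c *s L v"
    using assms(2) assms(3)[OF l] unfolding cholomorphic_on_def by blast
  have "(\<gamma> has_derivative (\<lambda>h. h *s (\<chi> k. deriv (\<lambda>l. \<gamma> l $ k) l))) (at l)"
    by (rule curve_deriv) (use holomorphic_derivI[OF assms(4) assms(1) l] in simp)
  from comp_field_deriv[OF L this]
  show "\<exists>f'. ((\<lambda>l. G (\<gamma> l) $ m) has_field_derivative f') (at l)" by blast
qed

lemma hol_curve_comp_conj: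
  fixes G :: "complex ^ 'n \<Rightarrow> complex ^ 'm" and \<eta> :: "complex \<Rightarrow> complex ^ 'n"
  assumes "open T" "cholomorphic_on G W" "\<And>l. l \<in> T \<Longrightarrow> cvec (\<eta> l) \<in> W"
    and "\<And>k. (\<lambda>l. \<eta> l $ k) holomorphic_on T"
  shows "(\<lambda>l. cnj (G (cvec (\<eta> l)) $ m)) holomorphic_on T"
  unfolding holomorphic_on_open[OF assms(1)]
proof
  fix l assume l: "l \<in> T"
  obtain L where L: "(G has_derivative L) (at (cvec (\<eta> l)))" "\<forall>c v. L (c *s v) = c *s L v"
    using assms(2) assms(3)[OF l] unfolding cholomorphic_on_def by blast
  note H = conj_hol[OF L]
  have "(\<eta> has_derivative (\<lambda>h. h *s (\<chi> k. deriv (\<lambda>l. \<eta> l $ k) l))) (at l)"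
    by (rule curve_deriv) (use holomorphic_derivI[OF assms(4) assms(1) l] in simp)
  from comp_field_deriv[OF H this]
  show "\<exists>f'. ((\<lambda>l. cnj (G (cvec (\<eta> l)) $ m)) has_field_derivative f') (at l)" by auto
qed

lemma isCont_vec:
  assumes "\<And>k. isCont (\<lambda>x. f x k) a"
  shows "isCont (\<lambda>x. \<chi> k. f x k) a"
  using assms unfolding isCont_def by (intro tendsto_vec_lambda) auto

lemma eventually_isCont:
  assumes "isCont f a" "open S" "f a \<in> S"
  shows "eventually (\<lambda>x. f x \<in> S) (nhds a)"
proof -
  have "(f \<longlongrightarrow> f a) (nhds a)" using assms(1) unfolding isCont_def tendsto_at_iff_tendsto_nhds .
  then show ?thesis using assms(2,3) topological_tendstoD by blast
qed

lemma hform_scale_left: "hform Ps Ns (c *s z) w = c * hform Ps Ns z w"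
  by (simp add: hform_def sum_distrib_left right_diff_distrib mult.assoc)

lemma hform_scale_right: "hform Ps Ns z (c *s w) = cnj c * hform Ps Ns z w"
  by (simp add: hform_def sum_distrib_left right_diff_distrib mult_ac)

lemma proj_pt_eq:
  assumes "proj_pt a = proj_pt b"
  shows "\<exists>c. c \<noteq> 0 \<and> a = c *s b"
proof -
  have "a \<in> proj_pt a" unfolding proj_pt_def by (rule CollectI, rule exI[of _ 1]) simp
  then show ?thesis using assms unfolding proj_pt_def by auto
qed

definition Acd :: "complex ^ (('n::finite \<times> bool) option) \<Rightarrow> 'n \<Rightarrow> complex" where
  "Acd X k = X $ Some (k, True)"
definition Bcd :: "complex ^ (('n::finite \<times> bool) option) \<Rightarrow> 'n \<Rightarrow> complex" where
  "Bcd X k = X $ Some (k, False)"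
definition thc :: "complex ^ (('n::finite \<times> bool) option) \<Rightarrow> complex" where
  "thc X = X $ None"

definition Rf :: "'n::finite set \<Rightarrow> 'n set \<Rightarrow> 'n \<Rightarrow> complex ^ (('n \<times> bool) option) \<Rightarrow> complex" where
  "Rf Ps Ns j X = (\<Sum>k\<in>Ps - {j}. (Acd X k + \<i> * Bcd X k) * (Acd X k - \<i> * Bcd X k))
      - (\<Sum>k\<in>Ns. (Acd X k + \<i> * Bcd X k) * (Acd X k - \<i> * Bcd X k))"

definition Sf :: "'n::finite set \<Rightarrow> 'n set \<Rightarrow> 'n \<Rightarrow> complex ^ (('n \<times> bool) option) \<Rightarrow> complex" where
  "Sf Ps Ns j X = csqrt (- Rf Ps Ns j X)"

definition zf :: "'n::finite set \<Rightarrow> 'n set \<Rightarrow> 'n \<Rightarrow> complex ^ (('n \<times> bool) option) \<Rightarrow> complex ^ 'n" where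
  "zf Ps Ns j X = (\<chi> k. if k = j then Sf Ps Ns j X * exp (\<i> * thc X) else Acd X k + \<i> * Bcd X k)"

definition eta :: "'n::finite set \<Rightarrow> 'n set \<Rightarrow> 'n \<Rightarrow> complex ^ (('n \<times> bool) option) \<Rightarrow> complex ^ 'n" where
  "eta Ps Ns j X = (\<chi> k. if k = j then Sf Ps Ns j X * exp (- (\<i> * thc X)) else Acd X k - \<i> * Bcd X k)"

lemma upd_comp_hol: "(\<lambda>l. upd X i l $ c) holomorphic_on T"
  by (cases "c = i") (simp_all add: upd_nth)

lemma Rf_hol: "(\<lambda>l. Rf Ps Ns j (upd X i l)) holomorphic_on T"
  unfolding Rf_def Acd_def Bcd_def
  by (intro holomorphic_intros upd_comp_hol)

lemma zf_comp_hol: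
  assumes "\<And>l. l \<in> T \<Longrightarrow> - Rf Ps Ns j (upd X i l) \<notin> \<real>\<^sub>\<le>\<^sub>0"
  shows "(\<lambda>l. zf Ps Ns j (upd X i l) $ k) holomorphic_on T"
proof (cases "k = j")
  case True
  then show ?thesis unfolding zf_def Sf_def thc_def
    using assms by (simp, intro holomorphic_intros Rf_hol upd_comp_hol) auto
next
  case False
  then show ?thesis unfolding zf_def Acd_def Bcd_def
    by (simp, intro holomorphic_intros upd_comp_hol)
qed

lemma eta_comp_hol:
  assumes "\<And>l. l \<in> T \<Longrightarrow> - Rf Ps Ns j (upd X i l) \<notin> \<real>\<^sub>\<le>\<^sub>0"
  shows "(\<lambda>l. eta Ps Ns j (upd X i l) $ k) holomorphic_on T"
proof (cases "k = j")
  case True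
  then show ?thesis unfolding eta_def Sf_def thc_def
    using assms by (simp, intro holomorphic_intros Rf_hol upd_comp_hol) auto
next
  case False
  then show ?thesis unfolding eta_def Acd_def Bcd_def
    by (simp, intro holomorphic_intros upd_comp_hol)
qed

lemma open_slice: "open {l. upd X i l \<in> ball c r}"
proof -
  have contu: "continuous_on UNIV (\<lambda>l. upd X i l)"
    unfolding upd_def
  proof (intro continuous_on_vec_lambda)
    fix k show "continuous_on UNIV (\<lambda>l. if k = i then l else X $ k)"
      by (cases "k = i") (simp_all add: continuous_on_const continuous_on_id)
  qed
  have "open ((\<lambda>l. upd X i l) -` ball c r)"
    by (rule open_vimage[OF open_ball contu])
  then show ?thesis unfolding vimage_def by simp
qed

lemma ff_slice_hol:
  fixes G :: "complex ^ 'n \<Rightarrow> complex ^ 'm"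
  assumes G: "cholomorphic_on G W"
    and good: "\<And>Y. Y \<in> ball c r \<Longrightarrow> zf Ps Ns j Y \<in> W \<and> cvec (eta Ps Ns j Y) \<in> W \<and> - Rf Ps Ns j Y \<notin> \<real>\<^sub>\<le>\<^sub>0"
  shows "(\<lambda>l. hform Ps' Ns' (G (zf Ps Ns j (upd X i l))) (G (cvec (eta Ps Ns j (upd X i l)))))
           holomorphic_on {l. upd X i l \<in> ball c r}"
proof -
  let ?T = "{l. upd X i l \<in> ball c r}"
  have o: "open ?T" by (rule open_slice)
  have h1: "(\<lambda>l. G (zf Ps Ns j (upd X i l)) $ m) holomorphic_on ?T" for m
    by (rule hol_curve_comp[OF o G]) (use good in \<open>auto intro!: zf_comp_hol\<close>)
  have h2: "(\<lambda>l. cnj (G (cvec (eta Ps Ns j (upd X i l))) $ m)) holomorphic_on ?T" for m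
    by (rule hol_curve_comp_conj[OF o G]) (use good in \<open>auto intro!: eta_comp_hol\<close>)
  show ?thesis unfolding hform_def
    by (intro holomorphic_intros h1 h2)
qed

lemma zf_nth: "zf Ps Ns j X $ k = (if k = j then Sf Ps Ns j X * exp (\<i> * thc X) else Acd X k + \<i> * Bcd X k)"
  by (simp add: zf_def)

lemma eta_nth: "eta Ps Ns j X $ k = (if k = j then Sf Ps Ns j X * exp (- (\<i> * thc X)) else Acd X k - \<i> * Bcd X k)"
  by (simp add: eta_def)

lemma hform_zf_split:
  assumes "j \<in> Ps" "j \<notin> Ns"
  shows "hform Ps Ns (zf Ps Ns j X) w = zf Ps Ns j X $ j * cnj (w $ j)
     + (\<Sum>k\<in>Ps - {j}. (Acd X k + \<i> * Bcd X k) * cnj (w $ k))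
     - (\<Sum>k\<in>Ns. (Acd X k + \<i> * Bcd X k) * cnj (w $ k))"
proof -
  have "(\<Sum>i\<in>Ps. zf Ps Ns j X $ i * cnj (w $ i)) = zf Ps Ns j X $ j * cnj (w $ j)
      + (\<Sum>k\<in>Ps - {j}. zf Ps Ns j X $ k * cnj (w $ k))"
    using assms(1) by (simp add: sum.remove)
  moreover have "(\<Sum>k\<in>Ps - {j}. zf Ps Ns j X $ k * cnj (w $ k)) = (\<Sum>k\<in>Ps - {j}. (Acd X k + \<i> * Bcd X k) * cnj (w $ k))"
    by (rule sum.cong) (auto simp: zf_nth)
  moreover have "(\<Sum>k\<in>Ns. zf Ps Ns j X $ k * cnj (w $ k)) = (\<Sum>k\<in>Ns. (Acd X k + \<i> * Bcd X k) * cnj (w $ k))"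
    by (rule sum.cong) (use assms(2) in \<open>auto simp: zf_nth\<close>)
  ultimately show ?thesis unfolding hform_def by simp
qed

lemma real_locus:
  fixes X :: "complex ^ (('n::finite \<times> bool) option)"
  assumes j: "j \<in> Ps" "j \<notin> Ns" and Xr: "\<forall>c. X $ c \<in> \<real>" and pos: "Re (- Rf Ps Ns j X) > 0"
  shows "cvec (eta Ps Ns j X) = zf Ps Ns j X" and "hform Ps Ns (zf Ps Ns j X) (zf Ps Ns j X) = 0"
proof -
  have cA: "cnj (Acd X k) = Acd X k" for k using Xr unfolding Acd_def by (simp add: Reals_cnj_iff)
  have cB: "cnj (Bcd X k) = Bcd X k" for k using Xr unfolding Bcd_def by (simp add: Reals_cnj_iff)
  have cT: "cnj (thc X) = thc X" using Xr unfolding thc_def by (simp add: Reals_cnj_iff)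
  have "cnj (Rf Ps Ns j X) = Rf Ps Ns j X"
    unfolding Rf_def by (simp add: cA cB mult.commute)
  then have "Im (- Rf Ps Ns j X) = 0" by (metis Reals_cnj_iff complex_is_Real_iff uminus_complex.sel(2) neg_equal_0_iff_equal)
  then have S: "Sf Ps Ns j X = of_real (sqrt (Re (- Rf Ps Ns j X)))"
    unfolding Sf_def using pos by (subst csqrt_of_real_nonneg) auto
  then have cS: "cnj (Sf Ps Ns j X) = Sf Ps Ns j X" by simp
  have S2: "Sf Ps Ns j X * Sf Ps Ns j X = - Rf Ps Ns j X"
    unfolding Sf_def by (metis power2_csqrt power2_eq_square)
  show ce: "cvec (eta Ps Ns j X) = zf Ps Ns j X"
    by (simp add: vec_eq_iff eta_nth zf_nth cS cA cB cT exp_cnj)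
  have "zf Ps Ns j X $ j * cnj (zf Ps Ns j X $ j) = - Rf Ps Ns j X"
  proof -
    have "zf Ps Ns j X $ j * cnj (zf Ps Ns j X $ j)
       = (Sf Ps Ns j X * Sf Ps Ns j X) * (exp (\<i> * thc X) * exp (- (\<i> * thc X)))"
      by (simp add: zf_nth cS cT exp_cnj)
    also have "\<dots> = - Rf Ps Ns j X" by (simp add: S2 flip: exp_add)
    finally show ?thesis .
  qed
  moreover have "(\<Sum>k\<in>Ps - {j}. (Acd X k + \<i> * Bcd X k) * cnj (zf Ps Ns j X $ k))
     = (\<Sum>k\<in>Ps - {j}. (Acd X k + \<i> * Bcd X k) * (Acd X k - \<i> * Bcd X k))"
    by (rule sum.cong) (auto simp: zf_nth cA cB)
  moreover have "(\<Sum>k\<in>Ns. (Acd X k + \<i> * Bcd X k) * cnj (zf Ps Ns j X $ k))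
     = (\<Sum>k\<in>Ns. (Acd X k + \<i> * Bcd X k) * (Acd X k - \<i> * Bcd X k))"
    by (rule sum.cong) (use j in \<open>auto simp: zf_nth cA cB\<close>)
  ultimately show "hform Ps Ns (zf Ps Ns j X) (zf Ps Ns j X) = 0"
    unfolding hform_zf_split[OF j] by (simp add: Rf_def)
qed

definition Yinv :: "complex ^ (('n::finite \<times> bool) option) \<Rightarrow> 'n \<Rightarrow> complex ^ 'n \<Rightarrow> complex ^ 'n
    \<Rightarrow> complex ^ (('n \<times> bool) option)" where
  "Yinv X0 j z w = (\<chi> c. case c of None \<Rightarrow> - \<i> * Ln (z $ j / csqrt (z $ j * cnj (w $ j)))
     | Some (k, b) \<Rightarrow> if k = j then X0 $ c else if b then (z $ k + cnj (w $ k)) / 2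
        else (z $ k - cnj (w $ k)) / (2 * \<i>))"

lemma Yinv_inv:
  fixes z w :: "complex ^ 'n::finite"
  assumes j: "j \<in> Ps" "j \<notin> Ns" and orth: "hform Ps Ns z w = 0" and nz: "z $ j \<noteq> 0" "w $ j \<noteq> 0"
  shows "zf Ps Ns j (Yinv X0 j z w) = z" and "cvec (eta Ps Ns j (Yinv X0 j z w)) = w"
proof -
  define Y where "Y = Yinv X0 j z w"
  have AB1: "Acd Y k + \<i> * Bcd Y k = z $ k" if "k \<noteq> j" for k
    using that unfolding Y_def Yinv_def Acd_def Bcd_def by (simp add: field_simps)
  have AB2: "Acd Y k - \<i> * Bcd Y k = cnj (w $ k)" if "k \<noteq> j" for k
    using that unfolding Y_def Yinv_def Acd_def Bcd_def by (simp add: field_simps)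
  have R: "Rf Ps Ns j Y = (\<Sum>k\<in>Ps - {j}. z $ k * cnj (w $ k)) - (\<Sum>k\<in>Ns. z $ k * cnj (w $ k))"
  proof -
    have "(\<Sum>k\<in>Ps - {j}. (Acd Y k + \<i> * Bcd Y k) * (Acd Y k - \<i> * Bcd Y k)) = (\<Sum>k\<in>Ps - {j}. z $ k * cnj (w $ k))"
      by (rule sum.cong) (auto simp: AB1 AB2)
    moreover have "(\<Sum>k\<in>Ns. (Acd Y k + \<i> * Bcd Y k) * (Acd Y k - \<i> * Bcd Y k)) = (\<Sum>k\<in>Ns. z $ k * cnj (w $ k))"
    proof (rule sum.cong)
      fix x assume "x \<in> Ns" then have "x \<noteq> j" using j by auto
      then show "(Acd Y x + \<i> * Bcd Y x) * (Acd Y x - \<i> * Bcd Y x) = z $ x * cnj (w $ x)"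
        by (simp add: AB1 AB2)
    qed simp
    ultimately show ?thesis unfolding Rf_def by simp
  qed
  have "hform Ps Ns z w = z $ j * cnj (w $ j) + (\<Sum>k\<in>Ps - {j}. z $ k * cnj (w $ k)) - (\<Sum>k\<in>Ns. z $ k * cnj (w $ k))"
    unfolding hform_def using j(1) by (simp add: sum.remove)
  then have mR: "- Rf Ps Ns j Y = z $ j * cnj (w $ j)" using orth R by (simp add: algebra_simps)
  define s where "s = csqrt (z $ j * cnj (w $ j))"
  have sS: "Sf Ps Ns j Y = s" unfolding Sf_def s_def mR ..
  have s0: "s \<noteq> 0" unfolding s_def using nz by simp
  have ss: "s * s = z $ j * cnj (w $ j)" unfolding s_def by (metis power2_csqrt power2_eq_square)
  have th: "thc Y = - \<i> * Ln (z $ j / s)" unfolding Y_def Yinv_def thc_def s_def by simp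
  have q0: "z $ j / s \<noteq> 0" using nz s0 by simp
  have e1: "exp (\<i> * thc Y) = z $ j / s"
    unfolding th using q0 by simp
  have e2: "exp (- (\<i> * thc Y)) = s / z $ j"
    unfolding th using q0 by (simp add: exp_minus)
  show "zf Ps Ns j Y = z"
    by (simp add: vec_eq_iff zf_nth AB1 sS e1 s0)
  have "eta Ps Ns j Y $ j = cnj (w $ j)"
    using nz s0 by (simp add: eta_nth sS e2 ss[symmetric] field_simps)
  then show "cvec (eta Ps Ns j Y) = w"
    by (auto simp: vec_eq_iff eta_nth AB2)
qed

definition Xc :: "complex ^ 'n::finite \<Rightarrow> complex ^ (('n \<times> bool) option)" where
  "Xc z0 = (\<chi> c. case c of None \<Rightarrow> 0 | Some (k, b) \<Rightarrow> if b then of_real (Re (z0 $ k)) else of_real (Im (z0 $ k)))"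

lemma Xc_real: "Xc z0 $ c \<in> \<real>"
  by (cases c) (auto simp: Xc_def split: prod.splits)

lemma Yinv_center:
  fixes z0 :: "complex ^ 'n::finite"
  assumes "z0 $ j \<in> \<real>" "Re (z0 $ j) > 0"
  shows "Yinv (Xc z0) j z0 z0 = Xc z0"
proof -
  obtain a where a: "z0 $ j = of_real a" "a > 0" using assms by (metis Reals_cases Re_complex_of_real)
  have "csqrt (z0 $ j * cnj (z0 $ j)) = z0 $ j"
    using a by (simp flip: of_real_mult)
  then have L: "Ln (z0 $ j / csqrt (z0 $ j * cnj (z0 $ j))) = 0" using a by simp
  show ?thesis
    unfolding Yinv_def
  proof (subst vec_eq_iff, intro allI)
    fix c :: "('n \<times> bool) option"
    show "(\<chi> c. case c of None \<Rightarrow> - \<i> * Ln (z0 $ j / csqrt (z0 $ j * cnj (z0 $ j)))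
     | Some (k, b) \<Rightarrow> if k = j then Xc z0 $ c else if b then (z0 $ k + cnj (z0 $ k)) / 2
        else (z0 $ k - cnj (z0 $ k)) / (2 * \<i>)) $ c = Xc z0 $ c"
    proof (cases c)
      case None then show ?thesis using L by (simp add: Xc_def)
    next
      case (Some p) then obtain k b where p: "c = Some (k, b)" by (cases p) auto
      show ?thesis using p
        by (auto simp: Xc_def complex_add_cnj complex_diff_cnj field_simps)
    qed
  qed
qed

lemma main_analytic:
  fixes Ps Ns :: "'n::finite set" and Ps' Ns' :: "'m::finite set"
    and G :: "complex ^ 'n \<Rightarrow> complex ^ 'm" and W :: "(complex ^ 'n) set"
    and z0 :: "complex ^ 'n" and j :: 'n
  assumes j: "j \<in> Ps" "j \<notin> Ns"
    and z0: "z0 \<in> W" "open W" "z0 $ j \<in> \<real>" "Re (z0 $ j) > 0" "hform Ps Ns z0 z0 = 0"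
    and Ghol: "cholomorphic_on G W"
    and Gnull: "\<And>z. z \<in> W \<Longrightarrow> hform Ps Ns z z = 0 \<Longrightarrow> hform Ps' Ns' (G z) (G z) = 0"
  shows "\<exists>\<delta>>0. \<forall>z w. z \<in> ball z0 \<delta> \<and> w \<in> ball z0 \<delta> \<and> hform Ps Ns z w = 0
            \<longrightarrow> hform Ps' Ns' (G z) (G w) = 0"
proof -
  define X0 where "X0 = Xc z0"
  have z0j: "z0 $ j \<noteq> 0" using z0(4) by auto
  have YX0: "Yinv X0 j z0 z0 = X0" unfolding X0_def by (rule Yinv_center[OF z0(3,4)])
  have zX0: "zf Ps Ns j X0 = z0" and eX0: "cvec (eta Ps Ns j X0) = z0"
    using Yinv_inv[OF j z0(5) z0j z0j, of X0] YX0 by auto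
  have SX0: "Sf Ps Ns j X0 = z0 $ j"
  proof -
    have "thc X0 = 0" unfolding X0_def Xc_def thc_def by simp
    then show ?thesis using arg_cong[OF zX0, of "\<lambda>v. v $ j"] by (simp add: zf_nth)
  qed
  have RX0: "- Rf Ps Ns j X0 = z0 $ j * z0 $ j"
    using SX0 unfolding Sf_def by (metis power2_csqrt power2_eq_square)
  have RX0pos: "Re (- Rf Ps Ns j X0) > 0"
  proof -
    obtain a where "z0 $ j = of_real a" "a > 0" using z0(3,4) by (metis Reals_cases Re_complex_of_real)
    then show ?thesis unfolding RX0 by simp
  qed
  have cR: "isCont (Rf Ps Ns j) X0"
    unfolding Rf_def Acd_def Bcd_def by (intro continuous_intros)
  have nR: "- Rf Ps Ns j X0 \<notin> \<real>\<^sub>\<le>\<^sub>0" using RX0pos by (simp add: complex_nonpos_Reals_iff)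
  have cS: "isCont (Sf Ps Ns j) X0"
    unfolding Sf_def using cR nR by (intro isCont_csqrt') (auto intro: continuous_intros)
  have cz: "isCont (zf Ps Ns j) X0"
    unfolding zf_def
  proof (rule isCont_vec)
    fix k show "isCont (\<lambda>X. if k = j then Sf Ps Ns j X * exp (\<i> * thc X) else Acd X k + \<i> * Bcd X k) X0"
      by (cases "k = j") (auto simp: thc_def Acd_def Bcd_def intro!: continuous_intros cS)
  qed
  have ce: "isCont (\<lambda>X. cvec (eta Ps Ns j X)) X0"
    unfolding cvec_def eta_def
  proof (rule isCont_vec)
    fix k show "isCont (\<lambda>X. cnj ((\<chi> k. if k = j then Sf Ps Ns j X * exp (- (\<i> * thc X)) else Acd X k - \<i> * Bcd X k) $ k)) X0"
      by (cases "k = j") (auto simp: thc_def Acd_def Bcd_def intro!: continuous_intros cS)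
  qed
  have ev: "eventually (\<lambda>X. zf Ps Ns j X \<in> W \<and> cvec (eta Ps Ns j X) \<in> W \<and> - Rf Ps Ns j X \<in> {w. Re w > 0}) (nhds X0)"
  proof -
    have cmR: "isCont (\<lambda>X. - Rf Ps Ns j X) X0" using cR by (intro continuous_intros)
    have e3: "eventually (\<lambda>X. - Rf Ps Ns j X \<in> {w. Re w > 0}) (nhds X0)"
      by (rule eventually_isCont[OF cmR open_halfspace_Re_gt]) (use RX0pos in simp)
    show ?thesis
      using eventually_isCont[OF cz z0(2)] eventually_isCont[OF ce z0(2)] e3 zX0 eX0 z0(1)
      by (auto intro!: eventually_conj)
  qed
  then obtain \<delta>1 where d1: "\<delta>1 > 0" and
    good1: "\<And>X. dist X X0 < \<delta>1 \<Longrightarrow> zf Ps Ns j X \<in> W \<and> cvec (eta Ps Ns j X) \<in> W \<and> Re (- Rf Ps Ns j X) > 0"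
    unfolding eventually_nhds_metric by auto
  have good: "\<And>Y. Y \<in> ball X0 \<delta>1 \<Longrightarrow> zf Ps Ns j Y \<in> W \<and> cvec (eta Ps Ns j Y) \<in> W \<and> - Rf Ps Ns j Y \<notin> \<real>\<^sub>\<le>\<^sub>0"
    using good1 by (simp add: dist_commute complex_nonpos_Reals_iff) (meson not_less)
  define ff where "ff = (\<lambda>X. hform Ps' Ns' (G (zf Ps Ns j X)) (G (cvec (eta Ps Ns j X))))"
  have ffz: "\<forall>X\<in>ball X0 \<delta>1. ff X = 0"
  proof (rule real_ball_zero)
    show "X0 $ i \<in> \<real>" for i unfolding X0_def by (rule Xc_real)
    show "(\<lambda>l. ff (upd X i l)) holomorphic_on {l. upd X i l \<in> ball X0 \<delta>1}" if "X \<in> ball X0 \<delta>1" for X i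
      unfolding ff_def by (rule ff_slice_hol[OF Ghol good])
    show "ff X = 0" if "X \<in> ball X0 \<delta>1" "\<forall>i. X $ i \<in> \<real>" for X :: "complex ^ (('n \<times> bool) option)"
    proof -
      have pos: "Re (- Rf Ps Ns j X) > 0" using good1 that(1) by (auto simp: dist_commute)
      note rl = real_locus[OF j that(2) pos]
      show ?thesis unfolding ff_def rl(1) using Gnull[OF _ rl(2)] good1 that(1) by (auto simp: dist_commute)
    qed
  qed
  define Yp where "Yp = (\<lambda>p :: (complex ^ 'n) \<times> (complex ^ 'n). Yinv X0 j (fst p) (snd p))"
  have a0: "z0 $ j * cnj (z0 $ j) \<notin> \<real>\<^sub>\<le>\<^sub>0"
  proof -
    obtain a where "z0 $ j = of_real a" "a > 0" using z0(3,4) by (metis Reals_cases Re_complex_of_real)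
    then show ?thesis by (simp add: complex_nonpos_Reals_iff not_le flip: of_real_mult)
  qed
  have a1: "z0 $ j / csqrt (z0 $ j * cnj (z0 $ j)) = 1"
  proof -
    obtain a where "z0 $ j = of_real a" "a > 0" using z0(3,4) by (metis Reals_cases Re_complex_of_real)
    then show ?thesis by (simp flip: of_real_mult)
  qed
  have cY: "isCont Yp (z0, z0)"
    unfolding Yp_def Yinv_def
  proof (rule isCont_vec)
    fix c :: "('n \<times> bool) option"
    show "isCont (\<lambda>p. case c of None \<Rightarrow> - \<i> * Ln (fst p $ j / csqrt (fst p $ j * cnj (snd p $ j)))
         | Some (k, b) \<Rightarrow> if k = j then X0 $ c else if b then (fst p $ k + cnj (snd p $ k)) / 2
              else (fst p $ k - cnj (snd p $ k)) / (2 * \<i>)) (z0, z0)"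
    proof (cases c)
      case None
      have "isCont (\<lambda>p. csqrt (fst p $ j * cnj (snd p $ j))) (z0, z0)"
        using a0 by (intro isCont_csqrt') (auto intro!: continuous_intros)
      moreover have "csqrt (z0 $ j * cnj (z0 $ j)) \<noteq> 0" using z0j by (simp add: complex_eq_iff)
      ultimately have "isCont (\<lambda>p. fst p $ j / csqrt (fst p $ j * cnj (snd p $ j))) (z0, z0)"
        by (intro continuous_intros) auto
      then have "isCont (\<lambda>p. Ln (fst p $ j / csqrt (fst p $ j * cnj (snd p $ j)))) (z0, z0)"
        using a1 by (intro isCont_Ln') auto
      then show ?thesis using None by (auto intro!: continuous_intros)
    next
      case (Some q) then obtain k b where q: "c = Some (k, b)" by (cases q) auto
      show ?thesis using q by (cases "k = j"; cases b) (auto intro!: continuous_intros)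
    qed
  qed
  have Ycen: "Yp (z0, z0) = X0" unfolding Yp_def using YX0 by simp
  have cfj: "isCont (\<lambda>p :: (complex ^ 'n) \<times> (complex ^ 'n). fst p $ j) (z0, z0)"
    by (intro continuous_intros)
  have csj: "isCont (\<lambda>p :: (complex ^ 'n) \<times> (complex ^ 'n). snd p $ j) (z0, z0)"
    by (intro continuous_intros)
  have ev2: "eventually (\<lambda>p. Yp p \<in> ball X0 \<delta>1 \<and> fst p $ j \<in> - {0} \<and> snd p $ j \<in> - {0}) (nhds (z0, z0))"
    using eventually_isCont[OF cY open_ball] eventually_isCont[OF cfj open_Compl[OF closed_singleton]]
      eventually_isCont[OF csj open_Compl[OF closed_singleton]] Ycen d1 z0j
    by (auto intro!: eventually_conj)
  then obtain \<delta>2 where d2: "\<delta>2 > 0" and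
    good2: "\<And>p. dist p (z0, z0) < \<delta>2 \<Longrightarrow> Yp p \<in> ball X0 \<delta>1 \<and> fst p $ j \<noteq> 0 \<and> snd p $ j \<noteq> 0"
    unfolding eventually_nhds_metric by auto
  show ?thesis
  proof (intro exI[of _ "\<delta>2 / 2"] conjI allI impI)
    show "\<delta>2 / 2 > 0" using d2 by simp
    fix z w assume H: "z \<in> ball z0 (\<delta>2 / 2) \<and> w \<in> ball z0 (\<delta>2 / 2) \<and> hform Ps Ns z w = 0"
    have "dist (z, w) (z0, z0) < \<delta>2"
      unfolding dist_Pair_Pair using H
      by (intro sqrt_sum_squares_half_less) (auto simp: dist_commute)
    note g = good2[OF this]
    have inv: "zf Ps Ns j (Yinv X0 j z w) = z" "cvec (eta Ps Ns j (Yinv X0 j z w)) = w"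
      using Yinv_inv[OF j _ , of z w X0] H g by auto
    have "ff (Yinv X0 j z w) = 0" using ffz g unfolding Yp_def by auto
    then show "hform Ps' Ns' (G z) (G w) = 0" unfolding ff_def inv .
  qed
qed

lemma istopology_proj:
  "istopology (\<lambda>U::(complex ^ 'n::finite) set set. U \<subseteq> Proj \<and> open {z. z \<noteq> 0 \<and> proj_pt z \<in> U})"
  unfolding istopology_def
proof (rule conjI; intro allI impI)
  fix S T :: "(complex ^ 'n) set set"
  assume "S \<subseteq> Proj \<and> open {z. z \<noteq> 0 \<and> proj_pt z \<in> S}" "T \<subseteq> Proj \<and> open {z. z \<noteq> 0 \<and> proj_pt z \<in> T}"
  moreover have "{z. z \<noteq> 0 \<and> proj_pt z \<in> S \<inter> T} = {z. z \<noteq> 0 \<and> proj_pt z \<in> S} \<inter> {z. z \<noteq> 0 \<and> proj_pt z \<in> T}" by auto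
  ultimately show "S \<inter> T \<subseteq> Proj \<and> open {z. z \<noteq> 0 \<and> proj_pt z \<in> S \<inter> T}" by auto
next
  fix K :: "(complex ^ 'n) set set set"
  assume H: "\<forall>S\<in>K. S \<subseteq> Proj \<and> open {z. z \<noteq> 0 \<and> proj_pt z \<in> S}"
  have "{z. z \<noteq> 0 \<and> proj_pt z \<in> \<Union>K} = (\<Union>S\<in>K. {z. z \<noteq> 0 \<and> proj_pt z \<in> S})" by auto
  then show "\<Union>K \<subseteq> Proj \<and> open {z. z \<noteq> 0 \<and> proj_pt z \<in> \<Union>K}" using H by auto
qed

lemma openin_proj:
  "openin proj_topology U \<longleftrightarrow> U \<subseteq> Proj \<and> open {z. z \<noteq> 0 \<and> proj_pt z \<in> U}"
  unfolding proj_topology_def topology_inverse'[OF istopology_proj] ..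

lemma proj_pt_in_Proj: "z \<noteq> 0 \<Longrightarrow> proj_pt z \<in> Proj"
  unfolding Proj_def by blast

lemma topspace_proj: "topspace (proj_topology :: (complex ^ 'n) set topology) = Proj"
proof -
  have "{z :: complex ^ 'n. z \<noteq> 0 \<and> proj_pt z \<in> Proj} = - {0}"
    using proj_pt_in_Proj by auto
  then have "openin proj_topology (Proj :: (complex ^ 'n) set set)"
    unfolding openin_proj by auto
  then show ?thesis unfolding topspace_def using openin_proj by blast
qed

lemma proj_pt_scale: "c \<noteq> 0 \<Longrightarrow> proj_pt (c *s z) = proj_pt z"
  unfolding proj_pt_def
proof (intro set_eqI iffI)
  fix x assume "c \<noteq> 0" "x \<in> {d *s (c *s z) |d. d \<noteq> 0}"
  then obtain d where "d \<noteq> 0" "x = d *s (c *s z)" by auto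
  then have "x = (d * c) *s z" by (simp add: vector_smult_assoc)
  then show "x \<in> {d *s z |d. d \<noteq> 0}" using \<open>d \<noteq> 0\<close> \<open>c \<noteq> 0\<close> by auto
next
  fix x assume "c \<noteq> 0" "x \<in> {d *s z |d. d \<noteq> 0}"
  then obtain d where "d \<noteq> 0" "x = d *s z" by auto
  then have "x = (d / c) *s (c *s z)" using \<open>c \<noteq> 0\<close> by (simp add: vector_smult_assoc)
  moreover have "d / c \<noteq> 0" using \<open>d \<noteq> 0\<close> \<open>c \<noteq> 0\<close> by auto
  ultimately show "x \<in> {d *s (c *s z) |d. d \<noteq> 0}" by blast
qed

lemma null_rep:
  assumes "null_pt Ps Ns p" "proj_pt v = p"
  shows "hform Ps Ns v v = 0"
proof -
  obtain u where u: "u \<noteq> 0" "p = proj_pt u" "hform Ps Ns u u = 0"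
    using assms(1) unfolding null_pt_def by blast
  obtain c where "v = c *s u" using proj_pt_eq[of v u] assms(2) u(2) by auto
  then show ?thesis using u(3) by (simp add: hform_scale_left hform_scale_right)
qed

lemma good_null_point:
  fixes Ps Ns :: "'n::finite set" and z :: "complex ^ 'n"
  assumes disj: "Ps \<inter> Ns = {}" and ne: "Ps \<noteq> {}" "Ns \<noteq> {}"
    and Om: "open Om" "z \<in> Om" "\<And>x c. x \<in> Om \<Longrightarrow> c \<noteq> 0 \<Longrightarrow> c *s x \<in> Om"
    and nz: "z \<noteq> 0" and null: "hform Ps Ns z z = 0"
  shows "\<exists>z0 j. z0 \<in> Om \<and> j \<in> Ps \<and> z0 $ j \<in> \<real> \<and> Re (z0 $ j) > 0 \<and> hform Ps Ns z0 z0 = 0"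
proof (cases "\<exists>j\<in>Ps. z $ j \<noteq> 0")
  case True
  then obtain j where j: "j \<in> Ps" "z $ j \<noteq> 0" by auto
  define c where "c = cnj (z $ j)"
  have c0: "c \<noteq> 0" using j unfolding c_def by simp
  have "(c *s z) $ j = of_real ((norm (z $ j))\<^sup>2)"
    unfolding c_def by (simp only: complex_norm_square vector_smult_component mult.commute)
  moreover have "norm (z $ j) > 0" using j by simp
  ultimately have "(c *s z) $ j \<in> \<real> \<and> Re ((c *s z) $ j) > 0" by simp
  moreover have "hform Ps Ns (c *s z) (c *s z) = 0" using null by (simp add: hform_scale_left hform_scale_right)
  ultimately show ?thesis using Om(3)[OF Om(2) c0] j(1) by blast
next
  case False
  then have zP: "\<And>k. k \<in> Ps \<Longrightarrow> z $ k = 0" by auto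
  have "(\<Sum>k\<in>Ns. z $ k * cnj (z $ k)) = 0" using null zP unfolding hform_def by simp
  then have "(\<Sum>k\<in>Ns. (norm (z $ k))\<^sup>2) = 0"
    by (metis (no_types, lifting) complex_norm_square of_real_eq_0_iff of_real_sum sum.cong)
  then have zN: "\<And>k. k \<in> Ns \<Longrightarrow> z $ k = 0"
    by (subst (asm) sum_nonneg_eq_0_iff) auto
  obtain j n where jn: "j \<in> Ps" "n \<in> Ns" using ne by auto
  have jn2: "j \<noteq> n" using jn disj by auto
  define v :: "complex ^ 'n" where "v = (\<chi> k. if k = j \<or> k = n then 1 else 0)"
  have ic: "isCont (\<lambda>t::real. z + t *\<^sub>R v) 0" by (intro continuous_intros)
  have "eventually (\<lambda>t. z + t *\<^sub>R v \<in> Om) (nhds 0)"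
    by (rule eventually_isCont[OF ic Om(1)]) (simp add: Om(2))
  then obtain d :: real where d: "d > 0" "\<And>t. dist t 0 < d \<Longrightarrow> z + t *\<^sub>R v \<in> Om"
    unfolding eventually_nhds_metric by auto
  define t where "t = d / 2"
  have t: "t > 0" "z + t *\<^sub>R v \<in> Om" using d by (auto simp: t_def)
  define z0 where "z0 = z + t *\<^sub>R v"
  have comp: "z0 $ k = z $ k + (if k = j \<or> k = n then of_real t else 0)" for k
    unfolding z0_def v_def by (simp add: of_real_def)
  have sP: "(\<Sum>k\<in>Ps. z0 $ k * cnj (z0 $ k)) = of_real t * of_real t"
  proof -
    have "(\<Sum>k\<in>Ps. z0 $ k * cnj (z0 $ k)) = (\<Sum>k\<in>Ps. if k = j then of_real t * of_real t else 0)"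
      by (rule sum.cong) (use jn disj zP in \<open>auto simp: comp\<close>)
    then show ?thesis using jn by simp
  qed
  have sN: "(\<Sum>k\<in>Ns. z0 $ k * cnj (z0 $ k)) = of_real t * of_real t"
  proof -
    have "(\<Sum>k\<in>Ns. z0 $ k * cnj (z0 $ k)) = (\<Sum>k\<in>Ns. if k = n then of_real t * of_real t else 0)"
      by (rule sum.cong) (use jn disj zN in \<open>auto simp: comp\<close>)
    then show ?thesis using jn by simp
  qed
  have "z0 $ j = of_real t" using comp[of j] zP[OF jn(1)] by simp
  then show ?thesis using t sP sN jn(1) unfolding hform_def z0_def[symmetric]
    by (intro exI[of _ z0] exI[of _ j]) auto
qed

lemma cont_smult: "continuous_on UNIV (\<lambda>x::complex ^ 'n::finite. c *s x)"
proof -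
  have "linear (\<lambda>x::complex ^ 'n. c *s x)"
    by (rule linearI) (simp_all add: vec_eq_iff algebra_simps)
  then have "bounded_linear (\<lambda>x::complex ^ 'n. c *s x)" using linear_conv_bounded_linear by blast
  then show ?thesis by (simp add: linear_continuous_on)
qed



theorem mainTheorem2:
  fixes Ps Ns :: "'n::finite set" and Ps' Ns' :: "'m::finite set"
    and F :: "(complex ^ 'n) set \<Rightarrow> (complex ^ 'm) set"
    and U :: "(complex ^ 'n) set set"
  assumes "signature_ok Ps Ns" and "signature_ok Ps' Ns'"
    and "card Ps \<ge> 1" and "card Ns \<ge> 1"
    and "openin proj_topology U"
    and "\<exists>p\<in>U. null_pt Ps Ns p"
    and "proj_holomorphic F U"
    and "\<forall>p\<in>U. null_pt Ps Ns p \<longrightarrow> null_pt Ps' Ns' (F p)"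
  shows "\<exists>V. V \<subseteq> U \<and> local_orthogonal_map Ps Ns Ps' Ns' F V"
proof -
  have hF1: "\<And>p. p \<in> U \<Longrightarrow> F p \<in> Proj" using assms(7) unfolding proj_holomorphic_def by blast
  have hF2: "\<exists>W G. open W \<and> x \<in> W \<and> (\<forall>w\<in>W. w \<noteq> 0 \<and> proj_pt w \<in> U) \<and>
           cholomorphic_on G W \<and> (\<forall>w\<in>W. G w \<noteq> 0 \<and> proj_pt (G w) = F (proj_pt w))"
    if "x \<noteq> 0" "proj_pt x \<in> U" for x
    using assms(7) that unfolding proj_holomorphic_def by (elim conjE allE[of _ x]) simp
  have disj: "Ps \<inter> Ns = {}" using assms(1) unfolding signature_ok_def .
  have neP: "Ps \<noteq> {}" using assms(3) by (metis card.empty not_one_le_zero)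
  have neN: "Ns \<noteq> {}" using assms(4) by (metis card.empty not_one_le_zero)
  obtain p where p: "p \<in> U" "null_pt Ps Ns p" using assms(6) by blast
  obtain z where z: "z \<noteq> 0" "p = proj_pt z" "hform Ps Ns z z = 0"
    using p(2) unfolding null_pt_def by blast
  define Om where "Om = {z. z \<noteq> 0 \<and> proj_pt z \<in> U}"
  have UP: "U \<subseteq> Proj" and oOm: "open Om" using assms(5) unfolding openin_proj Om_def by auto
  have Omsc: "c *s x \<in> Om" if "x \<in> Om" "c \<noteq> 0" for x c
  proof -
    have "c *s x \<noteq> 0" using that unfolding Om_def by (auto simp: vec_eq_iff)
    then show ?thesis using that proj_pt_scale[of c x] unfolding Om_def by auto
  qed
  have zOm: "z \<in> Om" using z p unfolding Om_def by auto
  obtain z0 j where z0: "z0 \<in> Om" "j \<in> Ps" "z0 $ j \<in> \<real>" "Re (z0 $ j) > 0" "hform Ps Ns z0 z0 = 0"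
    using good_null_point[OF disj neP neN oOm zOm Omsc z(1) z(3)] by blast
  have jN: "j \<notin> Ns" using z0(2) disj by auto
  have z0nz: "z0 \<noteq> 0" "proj_pt z0 \<in> U" using z0(1) unfolding Om_def by auto
  obtain W G where W: "open W" "z0 \<in> W" "\<forall>w\<in>W. w \<noteq> 0 \<and> proj_pt w \<in> U" "cholomorphic_on G W"
      "\<forall>w\<in>W. G w \<noteq> 0 \<and> proj_pt (G w) = F (proj_pt w)"
    using hF2[OF z0nz] by blast
  have Gnull: "hform Ps' Ns' (G x) (G x) = 0" if "x \<in> W" "hform Ps Ns x x = 0" for x
  proof -
    have "null_pt Ps Ns (proj_pt x)" using that W(3) unfolding null_pt_def by blast
    then have "null_pt Ps' Ns' (F (proj_pt x))" using assms(8) W(3) that(1) by blast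
    moreover have "proj_pt (G x) = F (proj_pt x)" using W(5) that(1) by blast
    ultimately show ?thesis by (rule null_rep)
  qed
  obtain \<delta> where d: "\<delta> > 0" and
    orthG: "\<And>x y. x \<in> ball z0 \<delta> \<Longrightarrow> y \<in> ball z0 \<delta> \<Longrightarrow> hform Ps Ns x y = 0 \<Longrightarrow> hform Ps' Ns' (G x) (G y) = 0"
    using main_analytic[OF z0(2) jN W(2) W(1) z0(3,4,5) W(4) Gnull] by blast
  obtain eW where eW: "eW > 0" "ball z0 eW \<subseteq> W" using W(1,2) open_contains_ball by blast
  define B where "B = ball z0 (min \<delta> eW)"
  have BW: "B \<subseteq> W" using eW unfolding B_def by auto
  have Bd: "B \<subseteq> ball z0 \<delta>" unfolding B_def by auto
  have z0B: "z0 \<in> B" using d eW unfolding B_def by simp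
  define V where "V = proj_pt ` B"
  have VU: "V \<subseteq> U" using BW W(3) unfolding V_def by auto
  have satV: "{x. x \<noteq> 0 \<and> proj_pt x \<in> V} = (\<Union>c\<in>-{0}. (\<lambda>x. c *s x) -` B)"
  proof (intro set_eqI iffI)
    fix x assume "x \<in> {x. x \<noteq> 0 \<and> proj_pt x \<in> V}"
    then obtain b where b: "b \<in> B" "proj_pt x = proj_pt b" "x \<noteq> 0" unfolding V_def by auto
    obtain c where "c \<noteq> 0" "b = c *s x" using proj_pt_eq[of b x] b by auto
    then show "x \<in> (\<Union>c\<in>-{0}. (\<lambda>x. c *s x) -` B)" using b by auto
  next
    fix x assume "x \<in> (\<Union>c\<in>-{0}. (\<lambda>x. c *s x) -` B)"
    then obtain c where c: "c \<noteq> 0" "c *s x \<in> B" by auto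
    then have "c *s x \<noteq> 0" using BW W(3) by auto
    then have "x \<noteq> 0" by auto
    moreover have "proj_pt x \<in> V" using c proj_pt_scale[of c x] unfolding V_def by (metis image_eqI)
    ultimately show "x \<in> {x. x \<noteq> 0 \<and> proj_pt x \<in> V}" by simp
  qed
  have VP: "V \<subseteq> Proj" using BW W(3) proj_pt_in_Proj unfolding V_def by auto
  have openV: "openin proj_topology V"
    unfolding openin_proj satV
  proof (intro conjI VP open_UN ballI)
    fix c :: complex
    show "open ((\<lambda>x. c *s x) -` B)"
      using open_vimage[OF _ cont_smult, of B c] unfolding B_def by simp
  qed
  have cmap: "continuous_map (top_of_set B) proj_topology proj_pt"
    unfolding continuous_map_def topspace_euclidean_subtopology topspace_proj
  proof (intro conjI allI impI)
    show "proj_pt \<in> B \<rightarrow> Proj" using BW W(3) proj_pt_in_Proj by auto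
    fix U' :: "(complex ^ 'n) set set" assume "openin proj_topology U'"
    then have "open {z. z \<noteq> 0 \<and> proj_pt z \<in> U'}" unfolding openin_proj by simp
    then have "openin (top_of_set B) (B \<inter> {z. z \<noteq> 0 \<and> proj_pt z \<in> U'})" by blast
    moreover have "B \<inter> {z. z \<noteq> 0 \<and> proj_pt z \<in> U'} = {x \<in> B. proj_pt x \<in> U'}"
      using BW W(3) by auto
    ultimately show "openin (top_of_set B) {x \<in> B. proj_pt x \<in> U'}" by simp
  qed
  have connV: "connectedin proj_topology V"
    unfolding V_def
    by (rule connectedin_continuous_map_image[OF cmap]) (simp add: connectedin_subtopology B_def)
  have nullV: "\<exists>p\<in>V. null_pt Ps Ns p"
    using z0B z0nz(1) z0(5) unfolding V_def null_pt_def by blast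
  have holV: "proj_holomorphic F V"
  proof -
    have h1: "\<forall>p\<in>V. F p \<in> Proj" using VU hF1 by blast
    have h2: "\<exists>W G. open W \<and> x \<in> W \<and> (\<forall>w\<in>W. w \<noteq> 0 \<and> proj_pt w \<in> V) \<and>
           cholomorphic_on G W \<and> (\<forall>w\<in>W. G w \<noteq> 0 \<and> proj_pt (G w) = F (proj_pt w))"
      if x: "x \<noteq> 0" "proj_pt x \<in> V" for x
    proof -
      have "proj_pt x \<in> U" using x(2) VU by blast
      from hF2[OF x(1) this] obtain W' G' where W': "open W'" "x \<in> W'" "cholomorphic_on G' W'"
        "\<forall>w\<in>W'. G' w \<noteq> 0 \<and> proj_pt (G' w) = F (proj_pt w)"
        by blast
      define W'' where "W'' = W' \<inter> {x. x \<noteq> 0 \<and> proj_pt x \<in> V}"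
      have o: "open W''" unfolding W''_def
        by (rule open_Int[OF W'(1)]) (use openV in \<open>simp add: openin_proj\<close>)
      have i: "x \<in> W''" using x W'(2) unfolding W''_def by blast
      have s: "\<forall>w\<in>W''. w \<noteq> 0 \<and> proj_pt w \<in> V" unfolding W''_def by blast
      have c: "cholomorphic_on G' W''" using W'(3) unfolding cholomorphic_on_def W''_def by blast
      have g: "\<forall>w\<in>W''. G' w \<noteq> 0 \<and> proj_pt (G' w) = F (proj_pt w)" using W'(4) unfolding W''_def by blast
      show ?thesis by (rule exI[of _ W''], rule exI[of _ G']) (intro conjI o i s c g)
    qed
    show ?thesis unfolding proj_holomorphic_def using h1 h2 by blast
  qed
  have orthV: "\<forall>p\<in>V. \<forall>q\<in>V. orth_pt Ps Ns p q \<longrightarrow> orth_pt Ps' Ns' (F p) (F q)"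
  proof (intro ballI impI)
    fix p q assume pq: "p \<in> V" "q \<in> V" "orth_pt Ps Ns p q"
    obtain b1 where b1: "b1 \<in> B" "p = proj_pt b1" using pq(1) unfolding V_def by auto
    obtain b2 where b2: "b2 \<in> B" "q = proj_pt b2" using pq(2) unfolding V_def by auto
    obtain x y where xy: "x \<noteq> 0" "y \<noteq> 0" "p = proj_pt x" "q = proj_pt y" "hform Ps Ns x y = 0"
      using pq(3) unfolding orth_pt_def by blast
    obtain c where c: "b1 = c *s x" using proj_pt_eq[of b1 x] b1 xy by auto
    obtain d where d: "b2 = d *s y" using proj_pt_eq[of b2 y] b2 xy by auto
    have "hform Ps Ns b1 b2 = 0" using xy(5) c d by (simp add: hform_scale_left hform_scale_right)
    then have "hform Ps' Ns' (G b1) (G b2) = 0" using orthG[of b1 b2] b1(1) b2(1) Bd by blast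
    moreover have "G b1 \<noteq> 0" "proj_pt (G b1) = F p" using W(5) BW b1 by auto
    moreover have "G b2 \<noteq> 0" "proj_pt (G b2) = F q" using W(5) BW b2 by auto
    ultimately show "orth_pt Ps' Ns' (F p) (F q)" unfolding orth_pt_def by metis
  qed
  show ?thesis
    unfolding local_orthogonal_map_def by (intro exI[of _ V] conjI VU openV connV nullV holV orthV)
qed


end
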